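(* Let $(\Omega_X,\mathcal{F}_X)$ and $(\Omega_y,\mathcal{F}_y)$ be measurable spaces and $\pi$ a probability measure on $(\Omega_X\times\Omega_y,\mathcal{F}_X\otimes\mathcal{F}_y)$. Let $s:\Omega_X\times\Omega_y\to\mathbb{R}$ be a measurable score function, $N\ge1$, $\alpha\in[0,1]$, and let $(X_1,y_1),\dots,(X_N,y_N),(X,y)$ be i.i.d. with law $\pi$. Let $\hat q$ be the $\lceil(1-\alpha)(N+1)\rceil$-th smallest value among $s(X_1,y_1),\dots,s(X_N,y_N)$ (with $\hat q=+\infty$ if $\lceil(1-\alpha)(N+1)\rceil>N$), and let $S(x)=\{y'\in\Omega_y:s(x,y')\le\hat q\}$. Let $\mathrm{MI}_{Xs}$ denote the mutual information between $X$ and $s(X,y)$ for $(X,y)\sim\pi$, and assume $0<\mathrm{MI}_{Xs}<\infty$. Then for every $\omega_X\in\mathcal{F}_X$ with $\mathbb{P}(X\in\omega_X)>0$, $$\mathbb{P}\big(y\in S(X)\,\big|\,X\in\omega_X\big)\ge(1-\alpha)-\frac{\sqrt{1-\exp(-\mathrm{MI}_{Xs})}}{\mathbb{P}(X\in\omega_X)},$$ the probability being taken jointly over the calibration data and the test point.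
   Context: Split-conformal setting: any model entering $s$ is fixed and independent of the calibration and test data; calibration points and test point are i.i.d. from $\pi$; coverage probabilities are marginalized over the calibration data. *)

theory Defs
  imports "HOL-Probability.Probability"
begin

definition conf_rank :: "real \<Rightarrow> nat \<Rightarrow> nat" where
  "conf_rank \<alpha> N = nat \<lceil>(1 - \<alpha>) * (real N + 1)\<rceil>"

definition conf_qhat :: "('a \<times> 'b \<Rightarrow> real) \<Rightarrow> real \<Rightarrow> nat \<Rightarrow> (nat \<Rightarrow> 'a \<times> 'b) \<Rightarrow> ereal" where
  "conf_qhat s \<alpha> N D =
     (let k = conf_rank \<alpha> N in
      if k = 0 then -\<infinity>
      else if N < k then \<infinity>
      else ereal (sort (map (\<lambda>i. s (D i)) [0..<N]) ! (k - 1)))"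

definition conf_set ::
  "'b measure \<Rightarrow> ('a \<times> 'b \<Rightarrow> real) \<Rightarrow> real \<Rightarrow> nat \<Rightarrow> (nat \<Rightarrow> 'a \<times> 'b) \<Rightarrow> 'a \<Rightarrow> 'b set" where
  "conf_set MY s \<alpha> N D x = {y' \<in> space MY. ereal (s (x, y')) \<le> conf_qhat s \<alpha> N D}"

end

theory Submission
  imports Defs
begin


lemma sqrt_le_amgm:
  fixes y t :: real assumes "0 \<le> y" "0 < t"
  shows "sqrt y \<le> (t * y + 1 / t) / 2"
proof -
  have "0 \<le> (sqrt (t*y) - sqrt (1/t))^2" by simp
  also have "\<dots> = t*y + 1/t - 2 * (sqrt (t*y) * sqrt (1/t))"
    using assms by (simp add: power2_diff)
  also have "sqrt (t*y) * sqrt (1/t) = sqrt y"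
    using assms by (simp add: real_sqrt_mult[symmetric])
  finally show ?thesis by simp
qed

lemma sqrt_ge_tangent:
  fixes y c :: real assumes "0 \<le> y"
  shows "exp c * (y * (1 - c) - y * ln y / 2) \<le> sqrt y"
proof (cases "y = 0")
  case True then show ?thesis by simp
next
  case False
  then have yp: "0 < y" using assms by simp
  have "1 - ln y / 2 - c \<le> exp (- ln y / 2 - c)"
    using exp_ge_add_one_self[of "- ln y / 2 - c"] by linarith
  then have "exp c * (1 - ln y / 2 - c) \<le> exp c * exp (- ln y / 2 - c)"
    by (intro mult_left_mono) auto
  also have "\<dots> = exp (- ln y / 2)" by (simp add: exp_add[symmetric])
  finally have h: "exp c * (1 - ln y / 2 - c) \<le> exp (- ln y / 2)" .
  have "y * exp (- ln y / 2) = sqrt y"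
  proof -
    have "y * exp (- ln y / 2) = exp (ln y) * exp (- ln y / 2)" using yp by simp
    also have "\<dots> = exp (ln y / 2)" by (simp add: exp_add[symmetric])
    also have "\<dots> = y powr (1/2)" using yp by (simp add: powr_def)
    also have "\<dots> = sqrt y" using yp by (simp add: powr_half_sqrt)
    finally show ?thesis .
  qed
  moreover have "y * (exp c * (1 - ln y / 2 - c)) \<le> y * exp (- ln y / 2)"
    using h yp by (intro mult_left_mono) auto
  ultimately show ?thesis by (simp add: algebra_simps)
qed

lemma inf_amgm:
  fixes a b e :: real assumes "0 \<le> a" "0 \<le> b" "0 < e"
  shows "\<exists>t>0. (t * a + b / t) / 2 < sqrt (a * b) + e"
proof (cases "a = 0")
  case True
  show ?thesis
  proof (intro exI conjI)
    show "0 < (b+1)/e" using assms by (intro divide_pos_pos) linarith+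
    have "b / ((b+1)/e) / 2 < e" using assms by (simp add: field_simps add_nonneg_pos)
    then show "((b+1)/e * a + b / ((b+1)/e)) / 2 < sqrt (a * b) + e" using True by simp
  qed
next
  case False
  then have ap: "0 < a" using assms by simp
  show ?thesis
  proof (cases "b = 0")
    case True
    show ?thesis
    proof (intro exI conjI)
      show "0 < e / a" using assms ap by simp
      show "(e / a * a + b / (e / a)) / 2 < sqrt (a * b) + e" using True ap assms by simp
    qed
  next
    case False
    then have bp: "0 < b" using assms by simp
    define t where "t = sqrt b / sqrt a"
    have tp: "0 < t" using ap bp by (simp add: t_def)
    have "t * a = sqrt (a*b)" using ap bp
      by (simp add: t_def real_sqrt_mult field_simps)
    moreover have "b / t = sqrt (a*b)" using ap bp
      by (simp add: t_def real_sqrt_mult field_simps)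
    ultimately show ?thesis using tp assms by (intro exI[of _ t]) auto
  qed
qed

lemma alg_bh:
  fixes a b :: real assumes "0 \<le> a" "a \<le> 1" "0 \<le> b" "b \<le> 1"
  shows "(sqrt (a*b) + sqrt ((1-a)*(1-b)))^2 \<le> 1 - (a-b)^2"
proof -
  define x where "x = sqrt a"
  define y where "y = sqrt b"
  define p where "p = sqrt (1-a)"
  define q where "q = sqrt (1-b)"
  have x2: "x^2 = a" and y2: "y^2 = b" and p2: "p^2 = 1-a" and q2: "q^2 = 1-b"
    using assms by (simp_all add: x_def y_def p_def q_def)
  have e1: "sqrt (a*b) = x*y" "sqrt ((1-a)*(1-b)) = p*q"
    by (simp_all add: x_def y_def p_def q_def real_sqrt_mult)
  have c1: "x^2 + p^2 = 1" "y^2 + q^2 = 1" using x2 y2 p2 q2 by simp_all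
  have id1: "(x*y+p*q)^2 + (x*q - y*p)^2 = (x^2+p^2)*(y^2+q^2)"
    by (simp add: power2_eq_square algebra_simps)
  have id2: "(x*q+y*p)^2 + (x*y - p*q)^2 = (x^2+p^2)*(y^2+q^2)"
    by (simp add: power2_eq_square algebra_simps)
  have id3: "x^2 - y^2 = x^2*(y^2+q^2) - y^2*(x^2+p^2)" using c1 by simp
  also have "\<dots> = (x*q - y*p)*(x*q+y*p)" by (simp add: power2_eq_square algebra_simps)
  finally have id3: "x^2 - y^2 = (x*q - y*p)*(x*q+y*p)" .
  have "(x*q+y*p)^2 = 1 - (x*y - p*q)^2" using id2 c1 by simp
  then have b1: "(x*q+y*p)^2 \<le> 1" by (smt (verit) zero_le_power2)
  have "(a-b)^2 = (x*q - y*p)^2 * (x*q+y*p)^2" using id3 x2 y2 by (simp add: power_mult_distrib)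
  also have "\<dots> \<le> (x*q - y*p)^2 * 1" by (intro mult_left_mono b1) simp
  finally have "(a-b)^2 \<le> (x*q - y*p)^2" by simp
  moreover have "(x*y+p*q)^2 = 1 - (x*q-y*p)^2" using id1 c1 by simp
  ultimately show ?thesis unfolding e1 by linarith
qed

lemma lin3: "(J::real) \<le> X + Y \<Longrightarrow> X < sa + (J - (sa+sb))/2 \<Longrightarrow> Y < sb + (J - (sa+sb))/2 \<Longrightarrow> False"
  by (simp add: field_simps)

lemma bh_real:
  fixes a b I K :: real
  assumes "0 \<le> a" "a \<le> 1" "0 \<le> b" "b \<le> 1" "exp (-K/2) \<le> I"
    and up: "\<And>t t'. 0 < t \<Longrightarrow> 0 < t' \<Longrightarrow> I \<le> (t*a + b/t)/2 + (t'*(1-a) + (1-b)/t')/2"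
  shows "\<bar>b - a\<bar> \<le> sqrt (1 - exp (-K))"
proof -
  define R where "R = sqrt (a*b) + sqrt ((1-a)*(1-b))"
  have IR: "I \<le> R"
  proof (rule ccontr)
    assume "\<not> I \<le> R"
    then have e: "0 < (I - R)/2" by simp
    obtain t where t: "t > 0" "(t * a + b / t) / 2 < sqrt (a * b) + (I-R)/2"
      using inf_amgm[OF assms(1,3) e] by blast
    obtain t' where t': "t' > 0" "(t' * (1-a) + (1-b) / t') / 2 < sqrt ((1-a) * (1-b)) + (I-R)/2"
      using inf_amgm[OF _ _ e, of "1-a" "1-b"] assms by auto
    show False
      using lin3[of I "(t*a+b/t)/2" "(t'*(1-a)+(1-b)/t')/2" "sqrt(a*b)" "sqrt((1-a)*(1-b))"]
        up[OF t(1) t'(1)] t(2) t'(2) unfolding R_def by blast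
  qed
  have Ip: "0 < I" using assms(5) by (smt (verit) exp_gt_zero)
  have "exp (-K) = (exp (-K/2))^2" by (simp add: power2_eq_square exp_add[symmetric])
  also have "\<dots> \<le> I^2" using assms(5) by (intro power_mono) auto
  also have "\<dots> \<le> R^2" using IR Ip by (intro power_mono) auto
  also have "\<dots> \<le> 1 - (a-b)^2" unfolding R_def by (rule alg_bh[OF assms(1-4)])
  finally have "(b-a)^2 \<le> 1 - exp (-K)" by (simp add: power2_commute)
  then have "sqrt ((b-a)^2) \<le> sqrt (1 - exp (-K))" by (rule real_sqrt_le_mono)
  then show ?thesis by simp
qed




lemma BH:
  fixes P Q :: "'c measure" and B :: "'c set"
  assumes PQ: "prob_space P" "prob_space Q" "sets P = sets Q" and ac: "absolutely_continuous Q P"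
    and int: "integrable P (entropy_density (exp 1) Q P)" and B: "B \<in> sets Q"
  shows "\<bar>measure Q B - measure P B\<bar> \<le> sqrt (1 - exp (- KL_divergence (exp 1) Q P))"
proof -
  interpret P: prob_space P by fact
  interpret Q: prob_space Q by fact
  define r where "r x = enn2real (RN_deriv Q P x)" for x
  have rm[measurable]: "r \<in> borel_measurable Q" unfolding r_def by measurable
  have r0: "\<And>x. 0 \<le> r x" by (simp add: r_def)
  have sfP: "sigma_finite_measure P" by (rule prob_space_imp_sigma_finite) fact
  have ed: "entropy_density (exp 1) Q P = (\<lambda>x. ln (r x))"
    by (auto simp: entropy_density_def r_def log_def fun_eq_iff)
  note RI = Q.RN_deriv_integrable[OF sfP ac PQ(3)]
  note RInt = Q.RN_deriv_integral[OF sfP ac PQ(3)]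
  have int_rl: "integrable Q (\<lambda>x. r x * ln (r x))"
    using RI[of "\<lambda>x. ln (r x)"] int ed unfolding r_def by auto
  define K where "K = KL_divergence (exp 1) Q P"
  have KL: "K = (\<integral>x. r x * ln (r x) \<partial>Q)"
    unfolding K_def KL_divergence_def ed using RInt[of "\<lambda>x. ln (r x)"] unfolding r_def by auto
  have int_r: "integrable Q r"
    using RI[of "\<lambda>_. 1"] unfolding r_def by auto
  have one: "(\<integral>x. r x \<partial>Q) = 1"
    using RInt[of "\<lambda>_. 1"] unfolding r_def by (auto simp: P.prob_space)
  have intPB: "integrable P (indicator B :: _ \<Rightarrow> real)"
    using B PQ(3) by (simp add: P.emeasure_eq_measure)
  have aB: "measure P B = (\<integral>x. r x * indicator B x \<partial>Q)"
  proof -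
    have "measure P B = (\<integral>x. indicator B x \<partial>P)"
      using B PQ(3) by (simp add: P.emeasure_eq_measure)
    also have "\<dots> = (\<integral>x. r x * indicator B x \<partial>Q)"
      using RInt[of "indicator B"] B intPB unfolding r_def by auto
    finally show ?thesis .
  qed
  have bB: "measure Q B = (\<integral>x. indicator B x \<partial>Q)"
    using B by (simp add: Q.emeasure_eq_measure)
  have int_rB: "integrable Q (\<lambda>x. r x * indicator B x)"
    using RI[of "indicator B"] B intPB unfolding r_def by auto
  have int_B: "integrable Q (\<lambda>x. indicator B x :: real)"
    using B by (simp add: Q.emeasure_eq_measure)
  define a where "a = measure P B"
  define b where "b = measure Q B"
  have a01: "0 \<le> a" "a \<le> 1" unfolding a_def by simp_all
  have b01: "0 \<le> b" "b \<le> 1" unfolding b_def by simp_all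
  define I where "I = (\<integral>x. sqrt (r x) \<partial>Q)"
  have int_s: "integrable Q (\<lambda>x. sqrt (r x))"
  proof (rule Bochner_Integration.integrable_bound[of Q "\<lambda>x. 1 + r x"])
    show "integrable Q (\<lambda>x. 1 + r x)" using int_r by simp
    show "(\<lambda>x. sqrt (r x)) \<in> borel_measurable Q" by measurable
    show "AE x in Q. norm (sqrt (r x)) \<le> norm (1 + r x)"
    proof (intro AE_I2)
      fix x
      have "sqrt (r x) \<le> (1 * r x + 1 / 1) / 2" by (rule sqrt_le_amgm) (use r0 in auto)
      then show "norm (sqrt (r x)) \<le> norm (1 + r x)" using r0[of x] by simp
    qed
  qed
  define c where "c = - K / 2"
  have low: "exp (-K/2) \<le> I"
  proof -
    have "(\<integral>x. exp c * (1 - c) * r x - exp c / 2 * (r x * ln (r x)) \<partial>Q)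
        = exp c * (1 - c) * (\<integral>x. r x \<partial>Q) - exp c / 2 * (\<integral>x. r x * ln (r x) \<partial>Q)"
      using int_r int_rl by simp
    also have "\<dots> = exp c" using one KL[symmetric] by (simp add: c_def field_simps)
    finally have eq: "(\<integral>x. exp c * (1 - c) * r x - exp c / 2 * (r x * ln (r x)) \<partial>Q) = exp c" .
    have "(\<integral>x. exp c * (1 - c) * r x - exp c / 2 * (r x * ln (r x)) \<partial>Q) \<le> I"
      unfolding I_def
    proof (rule integral_mono)
      show "integrable Q (\<lambda>x. exp c * (1 - c) * r x - exp c / 2 * (r x * ln (r x)))"
        using int_r int_rl by simp
      show "integrable Q (\<lambda>x. sqrt (r x))" by (rule int_s)
      fix x
      have "exp c * (r x * (1 - c) - r x * ln (r x) / 2) \<le> sqrt (r x)"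
        by (rule sqrt_ge_tangent) (rule r0)
      then show "exp c * (1 - c) * r x - exp c / 2 * (r x * ln (r x)) \<le> sqrt (r x)"
        by (simp add: algebra_simps)
    qed
    then show ?thesis using eq by (simp add: c_def)
  qed
  have up: "I \<le> (t*a + b/t)/2 + (t'*(1-a) + (1-b)/t')/2" if t: "0 < t" "0 < t'" for t t'
  proof -
    let ?g = "\<lambda>x. (t-t')/2 * (r x * indicator B x) + (1/t - 1/t')/2 * indicator B x + t'/2 * r x + 1/(2*t')"
    have "I \<le> (\<integral>x. ?g x \<partial>Q)"
      unfolding I_def
    proof (rule integral_mono)
      show "integrable Q (\<lambda>x. sqrt (r x))" by (rule int_s)
      show "integrable Q ?g" using int_r int_rB int_B by simp
      fix x
      show "sqrt (r x) \<le> ?g x"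
      proof (cases "x \<in> B")
        case True
        have "sqrt (r x) \<le> (t * r x + 1 / t) / 2" by (rule sqrt_le_amgm) (use r0 t in auto)
        then show ?thesis using True by (simp add: field_simps)
      next
        case False
        have "sqrt (r x) \<le> (t' * r x + 1 / t') / 2" by (rule sqrt_le_amgm) (use r0 t in auto)
        then show ?thesis using False by (simp add: field_simps)
      qed
    qed
    also have "(\<integral>x. ?g x \<partial>Q) = (t-t')/2 * a + (1/t - 1/t')/2 * b + t'/2 * 1 + 1/(2*t')"
      using int_r int_rB int_B unfolding a_def b_def aB bB by (simp add: one Q.prob_space)
    also have "\<dots> = (t*a + b/t)/2 + (t'*(1-a) + (1-b)/t')/2"
      using t by (simp add: field_simps)
    finally show ?thesis .
  qed
  have "\<bar>b - a\<bar> \<le> sqrt (1 - exp (-K))"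
    by (rule bh_real[OF a01 b01 low up]) auto
  then show ?thesis unfolding a_def b_def K_def .
qed




lemma sorted_kth:
  fixes ys :: "real list"
  assumes "sorted ys" "1 \<le> k" "k \<le> length ys"
  shows "r \<le> ys ! (k-1) \<longleftrightarrow> length (filter (\<lambda>v. v < r) ys) < k"
proof -
  have L: "length (filter (\<lambda>v. v < r) ys) = card {i. i < length ys \<and> ys ! i < r}"
    by (rule length_filter_conv_card)
  show ?thesis
  proof
    assume h: "r \<le> ys ! (k-1)"
    have "{i. i < length ys \<and> ys ! i < r} \<subseteq> {..<k-1}"
    proof
      fix i assume "i \<in> {i. i < length ys \<and> ys ! i < r}"
      then have i: "i < length ys" "ys ! i < r" by auto
      show "i \<in> {..<k-1}"
      proof (rule ccontr)
        assume "i \<notin> {..<k-1}"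
        then have ki: "k - 1 \<le> i" by simp
        have "ys ! (k-1) \<le> ys ! i" by (rule sorted_nth_mono[OF assms(1) ki i(1)])
        then show False using h i by simp
      qed
    qed
    then have "card {i. i < length ys \<and> ys ! i < r} \<le> card {..<k-1}"
      by (intro card_mono) auto
    then have "card {i. i < length ys \<and> ys ! i < r} \<le> k - 1" by simp
    then show "length (filter (\<lambda>v. v < r) ys) < k" using L assms(2) by simp
  next
    assume h: "length (filter (\<lambda>v. v < r) ys) < k"
    show "r \<le> ys ! (k-1)"
    proof (rule ccontr)
      assume "\<not> r \<le> ys ! (k-1)"
      then have hk: "ys ! (k-1) < r" by simp
      have "{..<k} \<subseteq> {i. i < length ys \<and> ys ! i < r}"
      proof
        fix i assume "i \<in> {..<k}"
        then have i: "i \<le> k - 1" "i < length ys" using assms by auto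
        have "ys ! i \<le> ys ! (k-1)" using assms(1) i(1) by (rule sorted_nth_mono) (use assms in auto)
        then show "i \<in> {i. i < length ys \<and> ys ! i < r}" using hk i by auto
      qed
      then have "card {..<k} \<le> card {i. i < length ys \<and> ys ! i < r}"
        by (intro card_mono) auto
      then have "k \<le> card {i. i < length ys \<and> ys ! i < r}" by simp
      then show False using h L by simp
    qed
  qed
qed

lemma qhat_iff:
  "ereal r \<le> conf_qhat s \<alpha> N D \<longleftrightarrow> card {i\<in>{..<N}. s (D i) < r} < conf_rank \<alpha> N"
proof -
  define k where "k = conf_rank \<alpha> N"
  have cardle: "card {i\<in>{..<N}. s (D i) < r} \<le> N"
    using card_mono[of "{..<N}" "{i\<in>{..<N}. s (D i) < r}"] by auto
  show ?thesis
  proof (cases "k = 0")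
    case True then show ?thesis by (simp add: conf_qhat_def k_def[symmetric])
  next
    case k0: False
    show ?thesis
    proof (cases "N < k")
      case True then show ?thesis using cardle k0 by (simp add: conf_qhat_def k_def[symmetric])
    next
      case False
      define xs where "xs = map (\<lambda>i. s (D i)) [0..<N]"
      have q: "conf_qhat s \<alpha> N D = ereal (sort xs ! (k-1))"
        using k0 False by (simp add: conf_qhat_def k_def[symmetric] xs_def)
      have "length (filter (\<lambda>v. v < r) (sort xs)) = length (filter (\<lambda>v. v < r) xs)"
        by (metis mset_filter mset_sort size_mset)
      also have "\<dots> = card {i. i < length xs \<and> xs ! i < r}" by (rule length_filter_conv_card)
      also have "{i. i < length xs \<and> xs ! i < r} = {i\<in>{..<N}. s (D i) < r}"
        by (auto simp: xs_def)
      finally have c: "length (filter (\<lambda>v. v < r) (sort xs)) = card {i\<in>{..<N}. s (D i) < r}" .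
      have "r \<le> sort xs ! (k-1) \<longleftrightarrow> length (filter (\<lambda>v. v < r) (sort xs)) < k"
        by (rule sorted_kth) (use k0 False in \<open>auto simp: xs_def\<close>)
      then show ?thesis using q c by (simp add: k_def)
    qed
  qed
qed

lemma comb:
  fixes u :: "'i \<Rightarrow> real"
  assumes "finite I" "k \<le> card I"
  shows "k \<le> card {j\<in>I. card {i\<in>I. u i < u j} < k}"
  using assms
proof (induction "card I" arbitrary: I)
  case 0 then show ?case by simp
next
  case (Suc n)
  then have ne: "I \<noteq> {}" by auto
  obtain a where a: "a \<in> I" "\<And>j. j \<in> I \<Longrightarrow> u j \<le> u a"
  proof -
    have "Max (u ` I) \<in> u ` I" using Suc.prems(1) ne by (intro Max_in) auto
    then obtain a where "a \<in> I" "u a = Max (u ` I)" by auto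
    moreover have "\<And>j. j \<in> I \<Longrightarrow> u j \<le> Max (u ` I)" using Suc.prems(1) by (intro Max_ge) auto
    ultimately show ?thesis using that by metis
  qed
  define I' where "I' = I - {a}"
  have cI': "card I' = n" "finite I'" using Suc.hyps(2) Suc.prems(1) a(1) by (auto simp: I'_def)
  show ?case
  proof (cases "k \<le> n")
    case True
    have IH: "k \<le> card {j\<in>I'. card {i\<in>I'. u i < u j} < k}"
      using Suc.hyps(1)[of I'] cI' True by simp
    have "{j\<in>I'. card {i\<in>I'. u i < u j} < k} \<subseteq> {j\<in>I. card {i\<in>I. u i < u j} < k}"
    proof
      fix j assume j: "j \<in> {j\<in>I'. card {i\<in>I'. u i < u j} < k}"
      then have "u j \<le> u a" using a(2) by (auto simp: I'_def)
      then have "{i\<in>I. u i < u j} = {i\<in>I'. u i < u j}" by (auto simp: I'_def)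
      then show "j \<in> {j\<in>I. card {i\<in>I. u i < u j} < k}" using j by (auto simp: I'_def)
    qed
    then have "card {j\<in>I'. card {i\<in>I'. u i < u j} < k} \<le> card {j\<in>I. card {i\<in>I. u i < u j} < k}"
      by (intro card_mono) (use Suc.prems(1) in auto)
    then show ?thesis using IH by simp
  next
    case False
    then have k: "k = card I" using Suc by simp
    have "{j\<in>I. card {i\<in>I. u i < u j} < k} = I"
    proof (intro set_eqI iffI)
      fix j assume j: "j \<in> I"
      have "{i\<in>I. u i < u j} \<subseteq> I - {j}" by auto
      then have "card {i\<in>I. u i < u j} \<le> card (I - {j})" by (intro card_mono) (use Suc.prems(1) in auto)
      also have "\<dots> < card I" by (rule card_Diff1_less) (use j Suc.prems(1) in auto)
      finally show "j \<in> {j\<in>I. card {i\<in>I. u i < u j} < k}" using j k by simp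
    qed auto
    then show ?thesis using k by simp
  qed
qed




lemma cardsum: "finite A \<Longrightarrow> real (card {i\<in>A. P i}) = (\<Sum>i\<in>A. if P i then 1 else 0)"
proof -
  assume fin: "finite A"
  have "real (card {i\<in>A. P i}) = (\<Sum>i\<in>{i\<in>A. P i}. 1)" by simp
  also have "\<dots> = (\<Sum>i\<in>A. if P i then 1 else 0)" by (rule sum.inter_filter[OF fin])
  finally show ?thesis .
qed

lemma fub:
  assumes M: "prob_space M" and Pm: "prob_space Pm" and S: "S \<in> sets (M \<Otimes>\<^sub>M Pm)"
  shows "measure (M \<Otimes>\<^sub>M Pm) S = (\<integral>D. measure Pm (Pair D -` S) \<partial>M)"
    and "integrable M (\<lambda>D. measure Pm (Pair D -` S))"
proof -
  interpret M: prob_space M by fact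
  interpret Pm: prob_space Pm by fact
  interpret pair_prob_space M Pm ..
  have meas: "(\<lambda>D. measure Pm (Pair D -` S)) \<in> borel_measurable M"
    unfolding measure_def by (intro borel_measurable_enn2real Pm.measurable_emeasure_Pair S)
  show int: "integrable M (\<lambda>D. measure Pm (Pair D -` S))"
    by (rule M.integrable_const_bound[where B=1]) (auto simp: meas)
  have "emeasure (M \<Otimes>\<^sub>M Pm) S = (\<integral>\<^sup>+D. emeasure Pm (Pair D -` S) \<partial>M)"
    by (rule Pm.emeasure_pair_measure_alt[OF S])
  also have "\<dots> = (\<integral>\<^sup>+D. ennreal (measure Pm (Pair D -` S)) \<partial>M)"
    by (intro nn_integral_cong) (simp add: Pm.emeasure_eq_measure)
  also have "\<dots> = ennreal (\<integral>D. measure Pm (Pair D -` S) \<partial>M)"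
    by (rule nn_integral_eq_integral[OF int]) simp
  finally show "measure (M \<Otimes>\<^sub>M Pm) S = (\<integral>D. measure Pm (Pair D -` S) \<partial>M)"
    by (simp add: measure_def)
qed



definition tr :: "nat \<Rightarrow> nat \<Rightarrow> nat \<Rightarrow> nat" where
  "tr j N n = (if n = j then N else if n = N then j else n)"

lemma tr_invol: "tr j N (tr j N n) = n" by (auto simp: tr_def)

lemma exch:
  fixes Pm :: "'x measure" and u :: "'x \<Rightarrow> real" and N k :: nat
  assumes Pm: "prob_space Pm" and u[measurable]: "u \<in> borel_measurable Pm" and k: "k \<le> Suc N"
  shows "real k / real (Suc N) \<le> measure ((\<Pi>\<^sub>M i\<in>{..<N}. Pm) \<Otimes>\<^sub>M Pm)
           {w \<in> space ((\<Pi>\<^sub>M i\<in>{..<N}. Pm) \<Otimes>\<^sub>M Pm). card {i\<in>{..<N}. u (fst w i) < u (snd w)} < k}"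
proof -
  define M where "M = (\<Pi>\<^sub>M i\<in>{..<N}. Pm)"
  define W where "W = M \<Otimes>\<^sub>M Pm"
  define I where "I = insert N {..<N}"
  define L where "L = (\<Pi>\<^sub>M i\<in>I. Pm)"
  interpret Pm: prob_space Pm by fact
  interpret M: prob_space M unfolding M_def by (intro prob_space_PiM Pm)
  interpret L: prob_space L unfolding L_def by (intro prob_space_PiM Pm)
  interpret pair_prob_space M Pm ..
  have finI: "finite I" and cardI: "card I = Suc N" by (auto simp: I_def)
  define E where "E j = {D \<in> space L. card {i\<in>I. u (D i) < u (D j)} < k}" for j
  have Emeas: "E j \<in> sets L" if j: "j \<in> I" for j
  proof -
    have cs: "(card {i\<in>I. u (D i) < u (D j)} < k) = ((\<Sum>i\<in>I. if u (D i) < u (D j) then 1 else 0::real) < real k)" for D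
    proof -
      have "(card {i\<in>I. u (D i) < u (D j)} < k) = (real (card {i\<in>I. u (D i) < u (D j)}) < real k)"
        by (rule of_nat_less_iff[symmetric])
      also have "real (card {i\<in>I. u (D i) < u (D j)}) = (\<Sum>i\<in>I. if u (D i) < u (D j) then 1 else 0::real)"
        by (rule cardsum[OF finI])
      finally show ?thesis .
    qed
    have "E j = {D \<in> space L. (\<Sum>i\<in>I. if u (D i) < u (D j) then 1 else 0::real) < real k}"
      unfolding E_def cs by (rule refl)
    also have "\<dots> \<in> sets L"
      unfolding L_def using j by measurable
    finally show ?thesis .
  qed
  define h where "h = (\<lambda>(f, y). f(N := y) :: nat \<Rightarrow> 'x)"
  have hm: "h \<in> measurable W L" unfolding h_def W_def M_def L_def I_def by (rule measurable_add_dim)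
  have dist: "distr W L h = L"
  proof -
    have sw: "distr (Pm \<Otimes>\<^sub>M M) W (\<lambda>(x,y). (y,x)) = W"
      unfolding W_def by (rule distr_pair_swap[symmetric])
    have swm: "(\<lambda>(x,y). (y,x)) \<in> measurable (Pm \<Otimes>\<^sub>M M) W" unfolding W_def by measurable
    have "distr W L h = distr (distr (Pm \<Otimes>\<^sub>M M) W (\<lambda>(x,y). (y,x))) L h" by (simp only: sw)
    also have "\<dots> = distr (Pm \<Otimes>\<^sub>M M) L (h \<circ> (\<lambda>(x,y). (y,x)))" by (rule distr_distr[OF hm swm])
    also have "h \<circ> (\<lambda>(x,y). (y,x)) = (\<lambda>(x, X). X(N := x))" by (auto simp: fun_eq_iff h_def)
    also have "distr (Pm \<Otimes>\<^sub>M M) L (\<lambda>(x, X). X(N := x)) = L"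
      unfolding M_def L_def I_def by (rule distr_pair_PiM_eq_PiM) (auto intro: Pm)
    finally show ?thesis .
  qed
  define S where "S = {w \<in> space W. card {i\<in>{..<N}. u (fst w i) < u (snd w)} < k}"
  have Sv: "S = h -` E N \<inter> space W"
  proof (intro set_eqI iffI)
    fix w assume w: "w \<in> S"
    then have ws: "w \<in> space W" by (simp add: S_def)
    have "h w \<in> space L" using measurable_space[OF hm ws] .
    moreover have "{i\<in>I. u (h w i) < u (h w N)} = {i\<in>{..<N}. u (fst w i) < u (snd w)}"
      by (auto simp: I_def h_def split: prod.splits)
    ultimately show "w \<in> h -` E N \<inter> space W" using w ws by (simp add: S_def E_def)
  next
    fix w assume w: "w \<in> h -` E N \<inter> space W"
    have "{i\<in>I. u (h w i) < u (h w N)} = {i\<in>{..<N}. u (fst w i) < u (snd w)}"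
      by (auto simp: I_def h_def split: prod.splits)
    then show "w \<in> S" using w by (simp add: S_def E_def)
  qed
  have NI: "N \<in> I" by (simp add: I_def)
  have mS: "measure W S = measure L (E N)"
    unfolding Sv using measure_distr[OF hm Emeas[OF NI]] dist by simp
  have mE: "measure L (E j) = measure L (E N)" if j: "j \<in> I" for j
  proof -
    define t where "t = (\<lambda>\<omega>. \<lambda>n\<in>I. \<omega> (tr j N n) :: 'x)"
    have trI: "tr j N n \<in> I" if "n \<in> I" for n using that j NI by (auto simp: tr_def)
    have injtr: "inj_on (tr j N) I" by (metis inj_onI tr_invol)
    have tm: "t \<in> measurable L L"
      unfolding t_def L_def by (intro measurable_restrict measurable_component_singleton trI)
    have dj: "distr L L t = L"
      unfolding t_def L_def using distr_PiM_reindex[of I "\<lambda>_. Pm" "tr j N" I] injtr trI Pm by auto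
    have "t -` E N \<inter> space L = E j"
    proof (intro set_eqI iffI)
      fix D assume D: "D \<in> t -` E N \<inter> space L"
      have tN: "t D N = D j" using NI by (simp add: t_def tr_def)
      have "{i\<in>I. u (t D i) < u (t D N)} = tr j N ` {i\<in>I. u (D i) < u (D j)}"
      proof (intro set_eqI iffI)
        fix i assume "i \<in> {i\<in>I. u (t D i) < u (t D N)}"
        then have "i \<in> I" "u (D (tr j N i)) < u (D j)" using tN by (auto simp: t_def)
        then show "i \<in> tr j N ` {i\<in>I. u (D i) < u (D j)}"
          using trI by (intro image_eqI[of _ _ "tr j N i"]) (auto simp: tr_invol)
      next
        fix i assume "i \<in> tr j N ` {i\<in>I. u (D i) < u (D j)}"
        then obtain i' where "i' \<in> I" "u (D i') < u (D j)" "i = tr j N i'" by auto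
        then show "i \<in> {i\<in>I. u (t D i) < u (t D N)}" using tN trI by (auto simp: t_def tr_invol)
      qed
      moreover have "card (tr j N ` {i\<in>I. u (D i) < u (D j)}) = card {i\<in>I. u (D i) < u (D j)}"
        by (rule card_image) (rule inj_on_subset[OF injtr], auto)
      moreover have "t D \<in> space L" using D by (simp add: E_def)
      ultimately show "D \<in> E j" using D by (simp add: E_def)
    next
      fix D assume D: "D \<in> E j"
      then have Ds: "D \<in> space L" by (simp add: E_def)
      have tN: "t D N = D j" using NI by (simp add: t_def tr_def)
      have "{i\<in>I. u (t D i) < u (t D N)} = tr j N ` {i\<in>I. u (D i) < u (D j)}"
      proof (intro set_eqI iffI)
        fix i assume "i \<in> {i\<in>I. u (t D i) < u (t D N)}"
        then have "i \<in> I" "u (D (tr j N i)) < u (D j)" using tN by (auto simp: t_def)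
        then show "i \<in> tr j N ` {i\<in>I. u (D i) < u (D j)}"
          using trI by (intro image_eqI[of _ _ "tr j N i"]) (auto simp: tr_invol)
      next
        fix i assume "i \<in> tr j N ` {i\<in>I. u (D i) < u (D j)}"
        then obtain i' where "i' \<in> I" "u (D i') < u (D j)" "i = tr j N i'" by auto
        then show "i \<in> {i\<in>I. u (t D i) < u (t D N)}" using tN trI by (auto simp: t_def tr_invol)
      qed
      moreover have "card (tr j N ` {i\<in>I. u (D i) < u (D j)}) = card {i\<in>I. u (D i) < u (D j)}"
        by (rule card_image) (rule inj_on_subset[OF injtr], auto)
      moreover have "t D \<in> space L" using measurable_space[OF tm Ds] .
      ultimately show "D \<in> t -` E N \<inter> space L" using D Ds by (simp add: E_def)
    qed
    then show ?thesis using measure_distr[OF tm Emeas[OF NI]] dj by simp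
  qed
  have intE: "integrable L (indicator (E j) :: _ \<Rightarrow> real)" if "j \<in> I" for j
    using Emeas[OF that] by (simp add: L.emeasure_eq_measure)
  have "real k \<le> (\<integral>D. (\<Sum>j\<in>I. indicator (E j) D) \<partial>L)"
  proof -
    have "(\<integral>D. real k \<partial>L) \<le> (\<integral>D. (\<Sum>j\<in>I. indicator (E j) D) \<partial>L)"
    proof (rule integral_mono)
      show "integrable L (\<lambda>D. real k)" by simp
      show "integrable L (\<lambda>D. \<Sum>j\<in>I. indicator (E j) D :: real)" using intE by simp
      fix D assume D: "D \<in> space L"
      have "(\<Sum>j\<in>I. indicator (E j) D :: real) = (\<Sum>j\<in>I. if card {i\<in>I. u (D i) < u (D j)} < k then 1 else 0)"
        using D by (intro sum.cong) (auto simp: E_def indicator_def)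
      also have "\<dots> = real (card {j\<in>I. card {i\<in>I. u (D i) < u (D j)} < k})"
        by (rule cardsum[OF finI, symmetric])
      finally have eq: "(\<Sum>j\<in>I. indicator (E j) D :: real) = real (card {j\<in>I. card {i\<in>I. u (D i) < u (D j)} < k})" .
      have "k \<le> card {j\<in>I. card {i\<in>I. (u \<circ> D) i < (u \<circ> D) j} < k}"
        by (rule comb) (use finI cardI k in auto)
      then show "real k \<le> (\<Sum>j\<in>I. indicator (E j) D)" unfolding eq by simp
    qed
    then show ?thesis by (simp add: L.prob_space)
  qed
  also have "(\<integral>D. (\<Sum>j\<in>I. indicator (E j) D) \<partial>L) = (\<Sum>j\<in>I. (\<integral>D. indicator (E j) D \<partial>L) :: real)"
    by (rule Bochner_Integration.integral_sum) (rule intE)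
  also have "\<dots> = (\<Sum>j\<in>I. measure L (E j))"
    by (intro sum.cong refl) (simp add: Emeas L.emeasure_eq_measure)
  also have "\<dots> = (\<Sum>j\<in>I. measure L (E N))" by (rule sum.cong) (auto simp: mE)
  also have "\<dots> = real (Suc N) * measure W S" using cardI mS by simp
  finally have "real k \<le> real (Suc N) * measure W S" .
  then show ?thesis unfolding S_def W_def M_def by (simp add: field_simps)
qed



theorem theoremS2:
  fixes MX :: "'a measure" and MY :: "'b measure" and \<pi> :: "('a \<times> 'b) measure"
    and s :: "'a \<times> 'b \<Rightarrow> real" and N :: nat and \<alpha> :: real and \<omega> :: "'a set"
  assumes prob: "prob_space \<pi>"
    and sets_pi: "sets \<pi> = sets (MX \<Otimes>\<^sub>M MY)"
    and s_meas: "s \<in> borel_measurable (MX \<Otimes>\<^sub>M MY)"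
    and N: "N \<ge> 1"
    and \<alpha>: "0 \<le> \<alpha>" "\<alpha> \<le> 1"
    \<comment> \<open>MI_Xs < infinity: joint law of (X, s(X,y)) is absolutely continuous w.r.t.
        the product of marginals and the log-density is integrable\<close>
    and MI_ac: "absolutely_continuous (distr \<pi> MX fst \<Otimes>\<^sub>M distr \<pi> borel s)
                   (distr \<pi> (MX \<Otimes>\<^sub>M borel) (\<lambda>z. (fst z, s z)))"
    and MI_int: "integrable (distr \<pi> (MX \<Otimes>\<^sub>M borel) (\<lambda>z. (fst z, s z)))
                   (entropy_density (exp 1) (distr \<pi> MX fst \<Otimes>\<^sub>M distr \<pi> borel s)
                      (distr \<pi> (MX \<Otimes>\<^sub>M borel) (\<lambda>z. (fst z, s z))))"
    and MI_pos: "0 < prob_space.mutual_information \<pi> (exp 1) MX borel fst s"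
    and \<omega>: "\<omega> \<in> sets MX"
    and P\<omega>: "measure \<pi> (\<omega> \<times> space MY) > 0"
  shows
    "measure ((\<Pi>\<^sub>M i\<in>{..<N}. \<pi>) \<Otimes>\<^sub>M \<pi>)
        {(D, (x, y)) \<in> space ((\<Pi>\<^sub>M i\<in>{..<N}. \<pi>) \<Otimes>\<^sub>M \<pi>).
            x \<in> \<omega> \<and> y \<in> conf_set MY s \<alpha> N D x}
      / measure ((\<Pi>\<^sub>M i\<in>{..<N}. \<pi>) \<Otimes>\<^sub>M \<pi>)
        {(D, (x, y)) \<in> space ((\<Pi>\<^sub>M i\<in>{..<N}. \<pi>) \<Otimes>\<^sub>M \<pi>). x \<in> \<omega>}
    \<ge> (1 - \<alpha>) - sqrt (1 - exp (- prob_space.mutual_information \<pi> (exp 1) MX borel fst s))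
                    / measure \<pi> (\<omega> \<times> space MY)"
proof -
  interpret P: prob_space \<pi> by (rule prob)
  have sp: "space \<pi> = space MX \<times> space MY"
    using sets_eq_imp_space_eq[OF sets_pi] by (simp add: space_pair_measure)
  have fstm[measurable]: "fst \<in> measurable \<pi> MX"
    by (subst measurable_cong_sets[OF sets_pi refl]) simp
  have sm[measurable]: "s \<in> borel_measurable \<pi>"
    by (subst measurable_cong_sets[OF sets_pi refl]) (rule s_meas)
  define MI where "MI = prob_space.mutual_information \<pi> (exp 1) MX borel fst s"
  define \<delta> where "\<delta> = sqrt (1 - exp (- MI))"
  define X where "X = distr \<pi> MX fst"
  define Y where "Y = distr \<pi> borel s"
  define Pj where "Pj = distr \<pi> (MX \<Otimes>\<^sub>M borel) (\<lambda>z. (fst z, s z))"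
  interpret X: prob_space X unfolding X_def by (rule P.prob_space_distr) simp
  interpret Y: prob_space Y unfolding Y_def by (rule P.prob_space_distr) simp
  interpret XY: pair_prob_space X Y ..
  have pjm: "(\<lambda>z. (fst z, s z)) \<in> measurable \<pi> (MX \<Otimes>\<^sub>M borel)" by measurable
  have info: "measure \<pi> {z\<in>space \<pi>. fst z \<in> A} * measure \<pi> {z\<in>space \<pi>. s z \<in> T} - \<delta>
      \<le> measure \<pi> {z\<in>space \<pi>. fst z \<in> A \<and> s z \<in> T}"
    if A: "A \<in> sets MX" and T: "T \<in> sets borel" for A T
  proof -
    have pQ: "prob_space (X \<Otimes>\<^sub>M Y)" by (rule XY.prob_space_axioms)
    have pP: "prob_space Pj" unfolding Pj_def by (rule P.prob_space_distr[OF pjm])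
    have sPQ: "sets Pj = sets (X \<Otimes>\<^sub>M Y)"
      unfolding Pj_def X_def Y_def by (simp cong: sets_pair_measure_cong)
    have AT: "A \<times> T \<in> sets (X \<Otimes>\<^sub>M Y)" unfolding X_def Y_def using A T by simp
    have h1: "\<bar>measure (X \<Otimes>\<^sub>M Y) (A \<times> T) - measure Pj (A \<times> T)\<bar> \<le> sqrt (1 - exp (- KL_divergence (exp 1) (X \<Otimes>\<^sub>M Y) Pj))"
      by (rule BH[OF pP pQ sPQ _ _ AT]) (use MI_ac MI_int in \<open>simp_all add: X_def Y_def Pj_def\<close>)
    have h2: "KL_divergence (exp 1) (X \<Otimes>\<^sub>M Y) Pj = MI"
      unfolding MI_def X_def Y_def Pj_def by (simp add: P.mutual_information_def)
    have h3: "measure (X \<Otimes>\<^sub>M Y) (A \<times> T) = measure \<pi> {z\<in>space \<pi>. fst z \<in> A} * measure \<pi> {z\<in>space \<pi>. s z \<in> T}"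
    proof -
      have "emeasure (X \<Otimes>\<^sub>M Y) (A \<times> T) = emeasure X A * emeasure Y T"
        by (rule Y.emeasure_pair_measure_Times) (use A T in \<open>simp_all add: X_def Y_def\<close>)
      then have "measure (X \<Otimes>\<^sub>M Y) (A \<times> T) = measure X A * measure Y T"
        by (simp add: measure_def enn2real_mult)
      also have "measure X A = measure \<pi> {z\<in>space \<pi>. fst z \<in> A}"
        unfolding X_def using A by (simp add: measure_distr vimage_def Int_def conj_commute)
      also have "measure Y T = measure \<pi> {z\<in>space \<pi>. s z \<in> T}"
        unfolding Y_def using T by (simp add: measure_distr vimage_def Int_def conj_commute)
      finally show ?thesis .
    qed
    have h4: "measure Pj (A \<times> T) = measure \<pi> {z\<in>space \<pi>. fst z \<in> A \<and> s z \<in> T}"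
      unfolding Pj_def using A T pjm by (simp add: measure_distr vimage_def Int_def conj_commute)
    have "\<bar>measure \<pi> {z\<in>space \<pi>. fst z \<in> A} * measure \<pi> {z\<in>space \<pi>. s z \<in> T} - measure \<pi> {z\<in>space \<pi>. fst z \<in> A \<and> s z \<in> T}\<bar> \<le> \<delta>"
      using h1 unfolding h2 h3 h4 \<delta>_def .
    then show ?thesis by (simp add: abs_le_iff)
  qed
  define k where "k = conf_rank \<alpha> N"
  define M where "M = (\<Pi>\<^sub>M i\<in>{..<N}. \<pi>)"
  define W where "W = M \<Otimes>\<^sub>M \<pi>"
  interpret M: prob_space M unfolding M_def by (intro prob_space_PiM prob)
  interpret MP: pair_prob_space M \<pi> ..
  have spW: "space W = space M \<times> space \<pi>" by (simp add: W_def space_pair_measure)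
  define Sg where "Sg A = {w \<in> space W. fst (snd w) \<in> A \<and> card {i\<in>{..<N}. s (fst w i) < s (snd w)} < k}" for A
  have Sg_meas: "Sg A \<in> sets W" if A: "A \<in> sets MX" for A
  proof -
    have cs: "(card {i\<in>{..<N}. s (fst w i) < s (snd w)} < k) =
       ((\<Sum>i\<in>{..<N}. if s (fst w i) < s (snd w) then 1 else 0::real) < real k)" for w
    proof -
      have "(card {i\<in>{..<N}. s (fst w i) < s (snd w)} < k) = (real (card {i\<in>{..<N}. s (fst w i) < s (snd w)}) < real k)"
        by (rule of_nat_less_iff[symmetric])
      also have "real (card {i\<in>{..<N}. s (fst w i) < s (snd w)}) = (\<Sum>i\<in>{..<N}. if s (fst w i) < s (snd w) then 1 else 0::real)"
        by (rule cardsum) simp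
      finally show ?thesis .
    qed
    have "Sg A = {w \<in> space W. fst (snd w) \<in> A \<and> (\<Sum>i\<in>{..<N}. if s (fst w i) < s (snd w) then 1 else 0::real) < real k}"
      unfolding Sg_def cs by (rule refl)
    also have "\<dots> \<in> sets W"
      unfolding W_def M_def using A by measurable
    finally show ?thesis .
  qed
  have slice: "Pair D -` Sg A = {z\<in>space \<pi>. fst z \<in> A \<and> card {i\<in>{..<N}. s (D i) < s z} < k}"
    if D: "D \<in> space M" for D A
    using D by (auto simp: Sg_def spW)
  have numset: "{(D, (x, y)) \<in> space W. x \<in> \<omega> \<and> y \<in> conf_set MY s \<alpha> N D x} = Sg \<omega>"
    by (auto simp: Sg_def conf_set_def qhat_iff k_def spW sp)
  have denset: "{(D, (x, y)) \<in> space W. x \<in> \<omega>} = Sg \<omega> \<union> {w \<in> space W. fst (snd w) \<in> \<omega>}"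
    by (auto simp: Sg_def)
  define p where "p = measure \<pi> (\<omega> \<times> space MY)"
  have pset: "{z\<in>space \<pi>. fst z \<in> \<omega>} = \<omega> \<times> space MY"
    using sets.sets_into_space[OF \<omega>] by (auto simp: sp)
  have den: "measure W {(D, (x, y)) \<in> space W. x \<in> \<omega>} = p"
  proof -
    have e: "{(D, (x, y)) \<in> space W. x \<in> \<omega>} = space M \<times> (\<omega> \<times> space MY)"
      using sets.sets_into_space[OF \<omega>] by (auto simp: spW sp)
    have "emeasure W (space M \<times> (\<omega> \<times> space MY)) = emeasure M (space M) * emeasure \<pi> (\<omega> \<times> space MY)"
      unfolding W_def by (rule P.emeasure_pair_measure_Times) (use \<omega> sets_pi in auto)
    then show ?thesis unfolding e p_def by (simp add: measure_def M.emeasure_space_1)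
  qed
  define T where "T D = {r. ereal r \<le> conf_qhat s \<alpha> N D}" for D
  have Tm: "T D \<in> sets borel" for D
  proof -
    have "T D = {r \<in> space borel. ereal r \<le> conf_qhat s \<alpha> N D}" by (simp add: T_def)
    also have "\<dots> \<in> sets borel" by measurable
    finally show ?thesis .
  qed
  have Tiff: "s z \<in> T D \<longleftrightarrow> card {i\<in>{..<N}. s (D i) < s z} < k" for z D
    by (simp add: T_def qhat_iff k_def)
  note F1 = fub[OF M.prob_space_axioms prob Sg_meas[OF \<omega>, unfolded W_def]]
  have spMX: "space MX \<in> sets MX" by simp
  note F2 = fub[OF M.prob_space_axioms prob Sg_meas[OF spMX, unfolded W_def]]
  have num: "p * (1 - \<alpha>) - \<delta> \<le> measure W (Sg \<omega>)"
  proof -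
    have "(\<integral>D. p * measure \<pi> (Pair D -` Sg (space MX)) - \<delta> \<partial>M) \<le> (\<integral>D. measure \<pi> (Pair D -` Sg \<omega>) \<partial>M)"
    proof (rule integral_mono)
      show "integrable M (\<lambda>D. p * measure \<pi> (Pair D -` Sg (space MX)) - \<delta>)" using F2(2) by simp
      show "integrable M (\<lambda>D. measure \<pi> (Pair D -` Sg \<omega>))" using F1(2) .
      fix D assume D: "D \<in> space M"
      have i: "measure \<pi> {z\<in>space \<pi>. fst z \<in> \<omega>} * measure \<pi> {z\<in>space \<pi>. s z \<in> T D} - \<delta>
          \<le> measure \<pi> {z\<in>space \<pi>. fst z \<in> \<omega> \<and> s z \<in> T D}"
        by (rule info[OF \<omega> Tm])
      have e1: "{z\<in>space \<pi>. fst z \<in> \<omega> \<and> s z \<in> T D} = Pair D -` Sg \<omega>"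
        unfolding slice[OF D] Tiff ..
      have e2: "{z\<in>space \<pi>. s z \<in> T D} = Pair D -` Sg (space MX)"
        unfolding slice[OF D] Tiff using sp by auto
      show "p * measure \<pi> (Pair D -` Sg (space MX)) - \<delta> \<le> measure \<pi> (Pair D -` Sg \<omega>)"
        using i unfolding e1 e2 pset p_def .
    qed
    also have "(\<integral>D. measure \<pi> (Pair D -` Sg \<omega>) \<partial>M) = measure W (Sg \<omega>)"
      unfolding W_def using F1(1) by simp
    also have "(\<integral>D. p * measure \<pi> (Pair D -` Sg (space MX)) - \<delta> \<partial>M) = p * measure W (Sg (space MX)) - \<delta>"
      unfolding W_def using F1(2) F2 by (simp add: M.prob_space)
    finally have a: "p * measure W (Sg (space MX)) - \<delta> \<le> measure W (Sg \<omega>)" .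
    have kN: "k \<le> Suc N"
    proof -
      have "(1 - \<alpha>) * (real N + 1) \<le> real N + 1" by (rule mult_left_le_one_le) (use \<alpha> in auto)
      then have "(1 - \<alpha>) * (real N + 1) \<le> real (Suc N)" using of_nat_Suc[of N] by linarith
      then have "\<lceil>(1 - \<alpha>) * (real N + 1)\<rceil> \<le> \<lceil>real (Suc N)\<rceil>" by (rule ceiling_mono)
      then have "\<lceil>(1 - \<alpha>) * (real N + 1)\<rceil> \<le> int (Suc N)" by (simp only: ceiling_of_nat)
      then show ?thesis unfolding k_def conf_rank_def using nat_le_iff by blast
    qed
    have ex: "real k / real (Suc N) \<le> measure W (Sg (space MX))"
    proof -
      have "Sg (space MX) = {w \<in> space W. card {i\<in>{..<N}. s (fst w i) < s (snd w)} < k}"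
        by (auto simp: Sg_def spW sp)
      then show ?thesis using exch[OF prob sm kN] unfolding W_def M_def by simp
    qed
    have "1 - \<alpha> \<le> real k / real (Suc N)"
    proof -
      have "(1 - \<alpha>) * (real N + 1) \<le> real k" unfolding k_def conf_rank_def by (rule of_nat_ceiling)
      then show ?thesis by (simp add: field_simps)
    qed
    then have "1 - \<alpha> \<le> measure W (Sg (space MX))" using ex by linarith
    moreover have "0 \<le> p" by (simp add: p_def)
    ultimately have "p * (1 - \<alpha>) \<le> p * measure W (Sg (space MX))" by (rule mult_left_mono)
    then show ?thesis using a by linarith
  qed
  have pp: "0 < p" using P\<omega> by (simp add: p_def)
  have "(1 - \<alpha>) - \<delta> / p = (p * (1 - \<alpha>) - \<delta>) / p" using pp by (simp add: field_simps)
  also have "\<dots> \<le> measure W (Sg \<omega>) / p" using num pp by (intro divide_right_mono) auto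
  finally have fin: "(1 - \<alpha>) - \<delta> / p \<le> measure W (Sg \<omega>) / p" .
  have n1: "measure ((\<Pi>\<^sub>M i\<in>{..<N}. \<pi>) \<Otimes>\<^sub>M \<pi>)
        {(D, (x, y)) \<in> space ((\<Pi>\<^sub>M i\<in>{..<N}. \<pi>) \<Otimes>\<^sub>M \<pi>).
            x \<in> \<omega> \<and> y \<in> conf_set MY s \<alpha> N D x} = measure W (Sg \<omega>)"
    unfolding numset[symmetric] W_def M_def ..
  have n2: "measure ((\<Pi>\<^sub>M i\<in>{..<N}. \<pi>) \<Otimes>\<^sub>M \<pi>)
        {(D, (x, y)) \<in> space ((\<Pi>\<^sub>M i\<in>{..<N}. \<pi>) \<Otimes>\<^sub>M \<pi>). x \<in> \<omega>} = p"
    using den unfolding W_def M_def .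
  show ?thesis unfolding n1 n2 using fin unfolding p_def \<delta>_def MI_def .
qed

end
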